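(* Let $(A_i)_{i\in I}$ be any family of finite partially ordered sets, each having a least element $0_i$ and a greatest element $1_i$, and let $A=\prod_{i\in I}A_i$ with the componentwise partial order $\preccurlyeq$. Let $W$ be the set of all up-sets $x$ of $A$ such that, for some natural number $n$ and distinct indices $i_0,\dots,i_{n-1}\in I$, $x$ is the inverse image, under the projection of $A$ onto $A_{i_0}\times\dots\times A_{i_{n-1}}$, of an up-set of that (componentwise ordered) finite product. Then $(A,W)$ is a Pratt comonoid.
   Context: An up-set of a poset $P$ is a subset $x$ with $a\in x$, $a\preccurlyeq b$ implying $b\in x$. A Pratt comonoid is a pair $(A,W)$ where $A$ is a set and $W$ is a set of subsets of $A$ such that (i) $\emptyset\in W$ and $A\in W$; (ii) whenever $C\subseteq A\times A$ is such that for every $a\in A$ both the $a$-th row $\{b\mid (a,b)\in C\}$ and the $a$-th column $\{b\mid (b,a)\in C\}$ belong to $W$ (a crossword over $W$), the diagonal $\{b\mid (b,b)\in C\}$ also belongs to $W$. *)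

theory Defs
  imports "HOL-Library.FuncSet"
begin

definition partial_order_on :: "'b set \<Rightarrow> ('b \<Rightarrow> 'b \<Rightarrow> bool) \<Rightarrow> bool" where
  "partial_order_on P le \<longleftrightarrow>
     (\<forall>a\<in>P. le a a) \<and>
     (\<forall>a\<in>P. \<forall>b\<in>P. le a b \<and> le b a \<longrightarrow> a = b) \<and>
     (\<forall>a\<in>P. \<forall>b\<in>P. \<forall>c\<in>P. le a b \<and> le b c \<longrightarrow> le a c)"

definition up_set :: "'b set \<Rightarrow> ('b \<Rightarrow> 'b \<Rightarrow> bool) \<Rightarrow> 'b set \<Rightarrow> bool" where
  "up_set P le x \<longleftrightarrow> x \<subseteq> P \<and> (\<forall>a\<in>x. \<forall>b\<in>P. le a b \<longrightarrow> b \<in> x)"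

definition prod_le :: "'i set \<Rightarrow> ('i \<Rightarrow> 'a \<Rightarrow> 'a \<Rightarrow> bool) \<Rightarrow> ('i \<Rightarrow> 'a) \<Rightarrow> ('i \<Rightarrow> 'a) \<Rightarrow> bool" where
  "prod_le J le f g \<longleftrightarrow> (\<forall>i\<in>J. le i (f i) (g i))"

definition crossword :: "'b set \<Rightarrow> 'b set set \<Rightarrow> ('b \<times> 'b) set \<Rightarrow> bool" where
  "crossword A W C \<longleftrightarrow> C \<subseteq> A \<times> A \<and>
     (\<forall>a\<in>A. {b. (a, b) \<in> C} \<in> W \<and> {b. (b, a) \<in> C} \<in> W)"

definition pratt_comonoid :: "'b set \<Rightarrow> 'b set set \<Rightarrow> bool" where
  "pratt_comonoid A W \<longleftrightarrow> W \<subseteq> Pow A \<and> {} \<in> W \<and> A \<in> W \<and>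
     (\<forall>C. crossword A W C \<longrightarrow> {b. (b, b) \<in> C} \<in> W)"

end

theory Submission
  imports Defs "HOL-Analysis.Function_Topology"
begin

lemma cyl_compact:
  assumes finS: "\<forall>i\<in>I. finite (S i)" and F: "\<forall>b\<in>PiE I S. finite (F b) \<and> F b \<subseteq> I"
  shows "\<exists>T. finite T \<and> T \<subseteq> PiE I S \<and> PiE I S \<subseteq> (\<Union>b\<in>T. {c\<in>PiE I S. \<forall>i\<in>F b. c i = b i})"
proof -
  define X where "X = product_topology (\<lambda>i. discrete_topology (S i)) I"
  have top: "topspace X = PiE I S" by (simp add: X_def)
  have cs: "compact_space X" unfolding X_def
    using finS by (simp add: compact_space_product_topology compact_space_discrete_topology)
  define N where "N b = PiE I (\<lambda>i. if i \<in> F b then {b i} else S i)" for b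
  have Neq: "N b = {c\<in>PiE I S. \<forall>i\<in>F b. c i = b i}" if "b \<in> PiE I S" for b
  proof (rule set_eqI)
    fix c
    show "c \<in> N b \<longleftrightarrow> c \<in> {c\<in>PiE I S. \<forall>i\<in>F b. c i = b i}"
    proof
      assume "c \<in> N b"
      then have c1: "\<And>i. i \<in> I \<Longrightarrow> c i \<in> (if i \<in> F b then {b i} else S i)"
        and c2: "\<And>i. i \<notin> I \<Longrightarrow> c i = undefined"
        unfolding N_def by (auto simp: PiE_iff extensional_def)
      have "\<forall>i\<in>F b. c i = b i" using c1 F that by (metis singletonD subsetD)
      moreover have "c \<in> PiE I S" unfolding PiE_iff
      proof (intro conjI ballI)
        fix i assume i: "i \<in> I"
        show "c i \<in> S i" using c1[OF i] that i by (cases "i \<in> F b") (auto simp: PiE_iff)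
      next
        show "c \<in> extensional I" using c2 by (simp add: extensional_def)
      qed
      ultimately show "c \<in> {c\<in>PiE I S. \<forall>i\<in>F b. c i = b i}" by simp
    next
      assume "c \<in> {c\<in>PiE I S. \<forall>i\<in>F b. c i = b i}"
      then show "c \<in> N b" unfolding N_def by (auto simp: PiE_iff extensional_def)
    qed
  qed
  have op: "openin X (N b)" if "b \<in> PiE I S" for b
  proof -
    have "{i \<in> I. (if i \<in> F b then {b i} else S i) \<noteq> topspace (discrete_topology (S i))} \<subseteq> F b"
      by auto
    then have "finite {i \<in> I. (if i \<in> F b then {b i} else S i) \<noteq> topspace (discrete_topology (S i))}"
      using F that finite_subset by blast
    moreover have "\<forall>i\<in>I. openin (discrete_topology (S i)) (if i \<in> F b then {b i} else S i)"
      using that by (auto simp: PiE_def Pi_def)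
    ultimately show ?thesis unfolding X_def N_def by (simp add: openin_PiE_gen)
  qed
  have cov: "topspace X \<subseteq> \<Union>(N ` PiE I S)"
    using top Neq by auto
  obtain \<F> where "finite \<F>" "\<F> \<subseteq> N ` PiE I S" "topspace X \<subseteq> \<Union>\<F>"
  proof -
    have o: "\<forall>U\<in>N ` PiE I S. openin X U" using op by blast
    have "\<exists>\<F>. finite \<F> \<and> \<F> \<subseteq> N ` PiE I S \<and> topspace X \<subseteq> \<Union>\<F>"
      using cs[unfolded compact_space_alt, rule_format, OF conjI[OF o cov]] .
    then show ?thesis using that by blast
  qed
  then obtain T where T: "finite T" "T \<subseteq> PiE I S" "\<F> = N ` T"
    by (meson finite_subset_image)
  have "PiE I S \<subseteq> (\<Union>b\<in>T. {c\<in>PiE I S. \<forall>i\<in>F b. c i = b i})"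
  proof
    fix c assume "c \<in> PiE I S"
    then have "c \<in> \<Union>(N ` T)" using T(3) \<open>topspace X \<subseteq> \<Union>\<F>\<close> top by blast
    then obtain b where "b \<in> T" "c \<in> N b" by blast
    then show "c \<in> (\<Union>b\<in>T. {c\<in>PiE I S. \<forall>i\<in>F b. c i = b i})"
      using Neq[of b] T(2) by blast
  qed
  then show ?thesis using T by blast
qed

lemma key:
  fixes P :: "('i \<Rightarrow> 'a) \<Rightarrow> ('i \<Rightarrow> 'a) \<Rightarrow> bool"
  assumes refl: "\<forall>i\<in>I. \<forall>x\<in>S i. le i x x"
    and zA: "z \<in> PiE I S" and zb: "\<forall>i\<in>I. \<forall>x\<in>S i. le i (z i) x"
    and rowup: "\<And>a b c. a \<in> PiE I S \<Longrightarrow> b \<in> PiE I S \<Longrightarrow> c \<in> PiE I S \<Longrightarrow> P a b \<Longrightarrow> prod_le I le b c \<Longrightarrow> P a c"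
    and colup: "\<And>a b c. a \<in> PiE I S \<Longrightarrow> b \<in> PiE I S \<Longrightarrow> c \<in> PiE I S \<Longrightarrow> P b a \<Longrightarrow> prod_le I le b c \<Longrightarrow> P c a"
    and rowdep: "\<And>a. a \<in> PiE I S \<Longrightarrow> \<exists>J. finite J \<and> J \<subseteq> I \<and> (\<forall>c\<in>PiE I S. \<forall>c'\<in>PiE I S. (\<forall>i\<in>J. c i = c' i) \<longrightarrow> P a c \<longrightarrow> P a c')"
    and coldep: "\<And>a. a \<in> PiE I S \<Longrightarrow> \<exists>J. finite J \<and> J \<subseteq> I \<and> (\<forall>c\<in>PiE I S. \<forall>c'\<in>PiE I S. (\<forall>i\<in>J. c i = c' i) \<longrightarrow> P c a \<longrightarrow> P c' a)"
    and bA: "b \<in> PiE I S" and bb: "P b b"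
  shows "\<exists>F. finite F \<and> F \<subseteq> I \<and> (\<forall>c\<in>PiE I S. (\<forall>i\<in>F. c i = b i) \<longrightarrow> P c c)"
proof -
  define mix where "mix F = (\<lambda>i. if i \<in> F then b i else z i)" for F
  have mixA: "mix F \<in> PiE I S" if "F \<subseteq> I" for F
  proof -
    have "\<forall>i\<in>I. mix F i \<in> S i" using zA bA unfolding mix_def PiE_iff by simp
    moreover have "mix F \<in> extensional I"
      using that zA unfolding mix_def PiE_iff extensional_def by auto
    ultimately show ?thesis unfolding PiE_iff by blast
  qed
  have mixle: "prod_le I le (mix F) (mix G)" if "F \<subseteq> G" for F G
    unfolding prod_le_def
  proof
    fix i assume i: "i \<in> I"
    have bi: "b i \<in> S i" and zi: "z i \<in> S i" using bA zA i by (auto simp: PiE_iff)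
    show "le i (mix F i) (mix G i)"
      unfolding mix_def using that refl zb bi zi i by auto
  qed
  obtain J where J: "finite J" "J \<subseteq> I" "\<forall>c\<in>PiE I S. \<forall>c'\<in>PiE I S. (\<forall>i\<in>J. c i = c' i) \<longrightarrow> P b c \<longrightarrow> P b c'"
    using rowdep[OF bA] by blast
  have ag1: "\<forall>i\<in>J. b i = mix J i" by (simp add: mix_def)
  have p: "P b (mix J)" using J(3)[rule_format, OF bA mixA[OF J(2)] ag1[rule_format] bb] .
  obtain J' where J': "finite J'" "J' \<subseteq> I" "\<forall>c\<in>PiE I S. \<forall>c'\<in>PiE I S. (\<forall>i\<in>J'. c i = c' i) \<longrightarrow> P c (mix J) \<longrightarrow> P c' (mix J)"
    using coldep[OF mixA[OF J(2)]] by blast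
  have ag2: "\<forall>i\<in>J'. b i = mix J' i" by (simp add: mix_def)
  have q: "P (mix J') (mix J)" using J'(3)[rule_format, OF bA mixA[OF J'(2)] ag2[rule_format] p] .
  have JJ: "J \<union> J' \<subseteq> I" using J J' by blast
  have r1: "P (mix (J \<union> J')) (mix J)"
    using colup[OF mixA[OF J(2)] mixA[OF J'(2)] mixA[OF JJ] q mixle] by blast
  have r: "P (mix (J \<union> J')) (mix (J \<union> J'))"
    using rowup[OF mixA[OF JJ] mixA[OF J(2)] mixA[OF JJ] r1 mixle] by blast
  show ?thesis
  proof (intro exI conjI ballI impI)
    show "finite (J \<union> J')" using J J' by blast
    show "J \<union> J' \<subseteq> I" by (rule JJ)
    fix c assume cA: "c \<in> PiE I S" and ag: "\<forall>i\<in>J \<union> J'. c i = b i"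
    have le: "prod_le I le (mix (J \<union> J')) c"
      unfolding prod_le_def mix_def using ag refl zb cA by (auto simp: PiE_iff)
    have "P (mix (J \<union> J')) c" using rowup[OF mixA[OF JJ] mixA[OF JJ] cA r le] .
    then show "P c c" using colup[OF cA mixA[OF JJ] cA _ le] by blast
  qed
qed


theorem theorem9p2:
  fixes I :: "'i set" and S :: "'i \<Rightarrow> 'a set" and le :: "'i \<Rightarrow> 'a \<Rightarrow> 'a \<Rightarrow> bool"
    and W :: "('i \<Rightarrow> 'a) set set"
  assumes fin: "\<And>i. i \<in> I \<Longrightarrow> finite (S i)"
    and po: "\<And>i. i \<in> I \<Longrightarrow> partial_order_on (S i) (le i)"
    and bot: "\<And>i. i \<in> I \<Longrightarrow> \<exists>z\<in>S i. \<forall>a\<in>S i. le i z a"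
    and top: "\<And>i. i \<in> I \<Longrightarrow> \<exists>t\<in>S i. \<forall>a\<in>S i. le i a t"
    and W_def: "W = {x. up_set (PiE I S) (prod_le I le) x \<and>
                   (\<exists>J U. finite J \<and> J \<subseteq> I \<and> up_set (PiE J S) (prod_le J le) U \<and>
                          x = {a \<in> PiE I S. restrict a J \<in> U})}"
  shows "pratt_comonoid (PiE I S) W"
proof -
  let ?A = "PiE I S"
  have refl: "\<forall>i\<in>I. \<forall>x\<in>S i. le i x x" using po unfolding partial_order_on_def by blast
  obtain z0 where z0: "\<forall>i\<in>I. z0 i \<in> S i \<and> (\<forall>a\<in>S i. le i (z0 i) a)"
    using bchoice[of I "\<lambda>i z. z \<in> S i \<and> (\<forall>a\<in>S i. le i z a)"] bot by blast
  obtain t0 where t0: "\<forall>i\<in>I. t0 i \<in> S i \<and> (\<forall>a\<in>S i. le i a (t0 i))"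
    using bchoice[of I "\<lambda>i z. z \<in> S i \<and> (\<forall>a\<in>S i. le i a z)"] top by blast
  define z where "z = restrict z0 I"
  define t where "t = restrict t0 I"
  have zA: "z \<in> ?A" and zb: "\<forall>i\<in>I. \<forall>x\<in>S i. le i (z i) x"
    using z0 unfolding z_def by (auto simp: restrict_PiE_iff)
  have tA: "t \<in> ?A" and tb: "\<forall>i\<in>I. \<forall>x\<in>S i. le i x (t i)"
    using t0 unfolding t_def by (auto simp: restrict_PiE_iff)
  have upW: "b \<in> x" if "x \<in> W" "a \<in> x" "b \<in> ?A" "prod_le I le a b" for x a b
    using that unfolding W_def up_set_def by blast
  have subW: "x \<subseteq> ?A" if "x \<in> W" for x
    using that unfolding W_def up_set_def by blast
  have dep: "\<exists>J. finite J \<and> J \<subseteq> I \<and> (\<forall>c\<in>?A. \<forall>c'\<in>?A. (\<forall>i\<in>J. c i = c' i) \<longrightarrow> c \<in> x \<longrightarrow> c' \<in> x)"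
    if "x \<in> W" for x
  proof -
    obtain J U where JU: "finite J" "J \<subseteq> I" "x = {a \<in> ?A. restrict a J \<in> U}"
      using \<open>x \<in> W\<close> unfolding W_def by blast
    have "restrict c J = restrict c' J" if "\<forall>i\<in>J. c i = c' i" for c c' :: "'i \<Rightarrow> 'a"
      using that by (auto simp: restrict_def fun_eq_iff)
    note r = this
    show ?thesis
    proof (intro exI[of _ J] conjI ballI impI)
      fix c c' assume "c \<in> ?A" "c' \<in> ?A" "\<forall>i\<in>J. c i = c' i" "c \<in> x"
      then show "c' \<in> x" using JU(3) r[of c c'] by simp
    qed (use JU in auto)
  qed
  have dep2: "\<exists>J. finite J \<and> J \<subseteq> I \<and> (\<forall>c\<in>?A. \<forall>c'\<in>?A. (\<forall>i\<in>J. c i = c' i) \<longrightarrow> c \<notin> x \<longrightarrow> c' \<notin> x)"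
    if xW: "x \<in> W" for x
  proof -
    obtain J where J: "finite J" "J \<subseteq> I" "\<forall>c\<in>?A. \<forall>c'\<in>?A. (\<forall>i\<in>J. c i = c' i) \<longrightarrow> c \<in> x \<longrightarrow> c' \<in> x"
      using dep[OF xW] by blast
    show ?thesis
    proof (intro exI[of _ J] conjI ballI impI)
      fix c c' assume "c \<in> ?A" "c' \<in> ?A" "\<forall>i\<in>J. c i = c' i" "c \<notin> x"
      then show "c' \<notin> x" using J(3) by metis
    qed (use J in auto)
  qed
  have emp: "{} \<in> W"
    unfolding W_def by (auto simp: up_set_def intro!: exI[of _ "{}"])
  have Aw: "?A \<in> W"
  proof -
    have "up_set ?A (prod_le I le) ?A" by (simp add: up_set_def)
    moreover have "up_set (PiE {} S) (prod_le {} le) (PiE {} S)" by (simp add: up_set_def)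
    moreover have "?A = {a \<in> ?A. restrict a {} \<in> PiE {} S}" by auto
    ultimately show ?thesis unfolding W_def by blast
  qed
  have cross: "{b. (b, b) \<in> C} \<in> W" if cw: "crossword ?A W C" for C
  proof -
    have CA: "C \<subseteq> ?A \<times> ?A" and rows: "\<And>a. a \<in> ?A \<Longrightarrow> {b. (a, b) \<in> C} \<in> W"
      and cols: "\<And>a. a \<in> ?A \<Longrightarrow> {b. (b, a) \<in> C} \<in> W"
      using cw unfolding crossword_def by auto
    define D where "D = {b. (b, b) \<in> C}"
    have DA: "D \<subseteq> ?A" using CA unfolding D_def by auto
    have Dup: "c \<in> D" if "b \<in> D" "c \<in> ?A" "prod_le I le b c" for b c
    proof -
      have bA: "b \<in> ?A" using that DA by blast
      have "(b, c) \<in> C" using upW[OF rows[OF bA], of b c] that unfolding D_def by auto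
      then have "(c, c) \<in> C" using upW[OF cols[OF that(2)], of b c] that bA by auto
      then show ?thesis unfolding D_def by simp
    qed
    have loc: "\<exists>F. finite F \<and> F \<subseteq> I \<and> (\<forall>c\<in>?A. (\<forall>i\<in>F. c i = b i) \<longrightarrow> (c \<in> D \<longleftrightarrow> b \<in> D))"
      if bA: "b \<in> ?A" for b
    proof (cases "b \<in> D")
      case True
      have "\<exists>F. finite F \<and> F \<subseteq> I \<and> (\<forall>c\<in>?A. (\<forall>i\<in>F. c i = b i) \<longrightarrow> (\<lambda>a b. (a, b) \<in> C) c c)"
      proof (rule key[where P="\<lambda>a b. (a, b) \<in> C" and le=le and z=z, OF refl zA zb _ _ _ _ bA])
        show "(\<lambda>a b. (a, b) \<in> C) a c" if "a \<in> ?A" "b \<in> ?A" "c \<in> ?A" "(\<lambda>a b. (a, b) \<in> C) a b" "prod_le I le b c" for a b c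
          using upW[OF rows[OF that(1)], of b c] that by auto
        show "(\<lambda>a b. (a, b) \<in> C) c a" if "a \<in> ?A" "b \<in> ?A" "c \<in> ?A" "(\<lambda>a b. (a, b) \<in> C) b a" "prod_le I le b c" for a b c
          using upW[OF cols[OF that(1)], of b c] that by auto
        show "\<exists>J. finite J \<and> J \<subseteq> I \<and> (\<forall>c\<in>?A. \<forall>c'\<in>?A. (\<forall>i\<in>J. c i = c' i) \<longrightarrow> (\<lambda>a b. (a, b) \<in> C) a c \<longrightarrow> (\<lambda>a b. (a, b) \<in> C) a c')" if "a \<in> ?A" for a
          using dep[OF rows[OF that]] by simp
        show "\<exists>J. finite J \<and> J \<subseteq> I \<and> (\<forall>c\<in>?A. \<forall>c'\<in>?A. (\<forall>i\<in>J. c i = c' i) \<longrightarrow> (\<lambda>a b. (a, b) \<in> C) c a \<longrightarrow> (\<lambda>a b. (a, b) \<in> C) c' a)" if "a \<in> ?A" for a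
          using dep[OF cols[OF that]] by simp
        show "(\<lambda>a b. (a, b) \<in> C) b b" using True unfolding D_def by simp
      qed
      then obtain F0 where F0: "finite F0" "F0 \<subseteq> I" "\<forall>c\<in>?A. (\<forall>i\<in>F0. c i = b i) \<longrightarrow> (c, c) \<in> C"
        by auto
      show ?thesis
      proof (intro exI[of _ F0] conjI ballI impI)
        fix c assume "c \<in> ?A" "\<forall>i\<in>F0. c i = b i"
        then have "(c, c) \<in> C" using F0(3) by blast
        then show "c \<in> D \<longleftrightarrow> b \<in> D" using True unfolding D_def by simp
      qed (use F0 in auto)
    next
      case False
      have refl': "\<forall>i\<in>I. \<forall>x\<in>S i. (\<lambda>i x y. le i y x) i x x" using refl by simp
      have tb': "\<forall>i\<in>I. \<forall>x\<in>S i. (\<lambda>i x y. le i y x) i (t i) x" using tb by simp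
      have pl: "prod_le I (\<lambda>i x y. le i y x) b c = prod_le I le c b" for b c
        by (simp add: prod_le_def)
      have "\<exists>F. finite F \<and> F \<subseteq> I \<and> (\<forall>c\<in>?A. (\<forall>i\<in>F. c i = b i) \<longrightarrow> (\<lambda>a b. (a, b) \<notin> C) c c)"
      proof (rule key[where P="\<lambda>a b. (a, b) \<notin> C" and le="\<lambda>i x y. le i y x" and z=t, OF refl' tA tb' _ _ _ _ bA])
        show "(\<lambda>a b. (a, b) \<notin> C) a c" if "a \<in> ?A" "b \<in> ?A" "c \<in> ?A" "(\<lambda>a b. (a, b) \<notin> C) a b" "prod_le I (\<lambda>i x y. le i y x) b c" for a b c
          using upW[OF rows[OF that(1)], of c b] that pl by auto
        show "(\<lambda>a b. (a, b) \<notin> C) c a" if "a \<in> ?A" "b \<in> ?A" "c \<in> ?A" "(\<lambda>a b. (a, b) \<notin> C) b a" "prod_le I (\<lambda>i x y. le i y x) b c" for a b c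
          using upW[OF cols[OF that(1)], of c b] that pl by auto
        show "\<exists>J. finite J \<and> J \<subseteq> I \<and> (\<forall>c\<in>?A. \<forall>c'\<in>?A. (\<forall>i\<in>J. c i = c' i) \<longrightarrow> (\<lambda>a b. (a, b) \<notin> C) a c \<longrightarrow> (\<lambda>a b. (a, b) \<notin> C) a c')" if "a \<in> ?A" for a
          using dep2[OF rows[OF that]] by simp
        show "\<exists>J. finite J \<and> J \<subseteq> I \<and> (\<forall>c\<in>?A. \<forall>c'\<in>?A. (\<forall>i\<in>J. c i = c' i) \<longrightarrow> (\<lambda>a b. (a, b) \<notin> C) c a \<longrightarrow> (\<lambda>a b. (a, b) \<notin> C) c' a)" if "a \<in> ?A" for a
          using dep2[OF cols[OF that]] by simp
        show "(\<lambda>a b. (a, b) \<notin> C) b b" using False unfolding D_def by simp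
      qed
      then obtain F0 where F0: "finite F0" "F0 \<subseteq> I" "\<forall>c\<in>?A. (\<forall>i\<in>F0. c i = b i) \<longrightarrow> (c, c) \<notin> C"
        by auto
      show ?thesis
      proof (intro exI[of _ F0] conjI ballI impI)
        fix c assume "c \<in> ?A" "\<forall>i\<in>F0. c i = b i"
        then have "(c, c) \<notin> C" using F0(3) by blast
        then show "c \<in> D \<longleftrightarrow> b \<in> D" using False unfolding D_def by simp
      qed (use F0 in auto)
    qed
    obtain F where F: "\<forall>b\<in>?A. finite (F b) \<and> F b \<subseteq> I \<and> (\<forall>c\<in>?A. (\<forall>i\<in>F b. c i = b i) \<longrightarrow> (c \<in> D \<longleftrightarrow> b \<in> D))"
    proof -
      have "\<forall>b\<in>?A. \<exists>F. finite F \<and> F \<subseteq> I \<and> (\<forall>c\<in>?A. (\<forall>i\<in>F. c i = b i) \<longrightarrow> (c \<in> D \<longleftrightarrow> b \<in> D))"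
        using loc by blast
      from bchoice[OF this] show ?thesis using that by blast
    qed
    have F1: "\<forall>b\<in>?A. finite (F b) \<and> F b \<subseteq> I" using F by blast
    obtain T where T: "finite T" "T \<subseteq> ?A" "?A \<subseteq> (\<Union>b\<in>T. {c\<in>?A. \<forall>i\<in>F b. c i = b i})"
      using cyl_compact[OF _ F1] fin by blast
    define K where "K = \<Union>(F ` T)"
    have Kfin: "finite K" using T F1 unfolding K_def by blast
    have KI: "K \<subseteq> I" using T F1 unfolding K_def by blast
    have depK: "c \<in> D \<longleftrightarrow> c' \<in> D" if cc: "c \<in> ?A" "c' \<in> ?A" "\<forall>i\<in>K. c i = c' i" for c c'
    proof -
      obtain b where b: "b \<in> T" "\<forall>i\<in>F b. c i = b i" using T(3) cc(1) by blast
      have bA: "b \<in> ?A" using b T by blast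
      have "\<forall>i\<in>F b. c' i = b i" using b cc(3) unfolding K_def by auto
      then show ?thesis using F bA b cc by blast
    qed
    define U where "U = (\<lambda>a. restrict a K) ` D"
    have Uup: "up_set (PiE K S) (prod_le K le) U"
      unfolding up_set_def
    proof (intro conjI ballI impI)
      show "U \<subseteq> PiE K S" unfolding U_def
      proof
        fix u assume "u \<in> (\<lambda>a. restrict a K) ` D"
        then obtain a where "a \<in> D" "u = restrict a K" by blast
        then have "a \<in> ?A" using DA by blast
        then have "\<forall>i\<in>K. a i \<in> S i" using KI by (auto simp: PiE_iff)
        then show "u \<in> PiE K S" using \<open>u = restrict a K\<close> by (simp add: restrict_PiE_iff)
      qed
      fix u v assume u: "u \<in> U" and v: "v \<in> PiE K S" and uv: "prod_le K le u v"
      obtain a where a: "a \<in> D" "u = restrict a K" using u U_def by blast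
      have aA: "a \<in> ?A" using a DA by blast
      define a' where "a' = (\<lambda>i. if i \<in> K then v i else a i)"
      have a'A: "a' \<in> ?A" using aA v KI unfolding a'_def by (auto simp: PiE_iff extensional_def)
      have "prod_le I le a a'"
        unfolding prod_le_def
      proof
        fix i assume i: "i \<in> I"
        show "le i (a i) (a' i)"
        proof (cases "i \<in> K")
          case True then show ?thesis using uv a unfolding prod_le_def a'_def by auto
        next
          case False then show ?thesis using refl aA i unfolding a'_def by (auto simp: PiE_iff)
        qed
      qed
      then have "a' \<in> D" using Dup a a'A by blast
      moreover have "restrict a' K = v" using v unfolding a'_def by (auto simp: restrict_def fun_eq_iff PiE_iff extensional_def)
      ultimately show "v \<in> U" unfolding U_def by force
    qed
    have Deq: "D = {a \<in> ?A. restrict a K \<in> U}"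
    proof
      show "D \<subseteq> {a \<in> ?A. restrict a K \<in> U}" using DA unfolding U_def by auto
      show "{a \<in> ?A. restrict a K \<in> U} \<subseteq> D"
      proof
        fix a assume "a \<in> {a \<in> ?A. restrict a K \<in> U}"
        then obtain d where d: "a \<in> ?A" "d \<in> D" "restrict a K = restrict d K" unfolding U_def by blast
        have "\<forall>i\<in>K. d i = a i" using d(3) by (metis restrict_apply')
        then show "a \<in> D" using depK[of d a] d DA by blast
      qed
    qed
    have "up_set ?A (prod_le I le) D" unfolding up_set_def using DA Dup by blast
    then have "D \<in> W" unfolding W_def using Kfin KI Uup Deq by blast
    then show ?thesis unfolding D_def .
  qed
  show ?thesis unfolding pratt_comonoid_def using subW emp Aw cross by blast
qed



end
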